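(* Let $k$ be a field and $d,m$ integers with $d\ge 3$, $m\ge 3d-2$ and $(m-1)!\ne 0$ in $k$. Let $Y\subseteq k$ be a subset of cardinality $d$ such that the set of differences $Y-Y=\{y_1-y_2: y_1,y_2\in Y\}$ has cardinality $1+2\binom d2$. Let $V\subseteq k[\beta]$ be the $k$-subspace containing $(\beta^m)$ with $V/(\beta^m)=\sum_{y\in Y}k\,(e^{y\beta}\bmod\beta^m)$. Then there is no nonzero differential operator $\Theta=A(\beta)+B(\beta)\frac{d}{d\beta}$ with $A,B\in(\beta)$ (i.e. $A(0)=B(0)=0$) and $\deg A,\deg B<m$ such that $\Theta(V)\subseteq V$.
   Context: $k[\beta]$ is the polynomial ring; $e^{y\beta}\bmod\beta^m$ denotes the class of $\sum_{\nu=0}^{m-1}\frac{y^\nu}{\nu!}\beta^\nu$ in $k[\beta]/(\beta^m)$. A differential operator $A+B\frac{d}{d\beta}$ acts on $k[\beta]$ by $v\mapsto Av+Bv'$. *)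

theory Defs
  imports "HOL-Computational_Algebra.Polynomial"
begin

text \<open>Truncated exponential: representative of e^{y beta} mod beta^m,
  i.e. sum over nu < m of (y^nu / nu!) beta^nu.\<close>
definition exp_trunc :: "nat \<Rightarrow> 'a::field \<Rightarrow> 'a poly" where
  "exp_trunc m y = (\<Sum>\<nu><m. monom (y ^ \<nu> / of_nat (fact \<nu>)) \<nu>)"

definition V_space :: "nat \<Rightarrow> 'a::field set \<Rightarrow> 'a poly set" where
  "V_space m Y = {v. \<exists>c :: 'a \<Rightarrow> 'a.
       monom 1 m dvd (v - (\<Sum>y\<in>Y. smult (c y) (exp_trunc m y)))}"

definition diff_op :: "'a::field poly \<Rightarrow> 'a poly \<Rightarrow> 'a poly \<Rightarrow> 'a poly" where
  "diff_op A B v = A * v + B * pderiv v"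

end

theory Submission imports Defs begin

lemma fact_nz:
  assumes "(of_nat (fact (m - 1)) :: 'a::field) \<noteq> 0" "k < m"
  shows "(of_nat (fact k) :: 'a) \<noteq> 0"
proof
  assume h: "(of_nat (fact k) :: 'a) = 0"
  have "fact k dvd (fact (m - 1) :: nat)" using assms(2) by (intro fact_dvd) simp
  then obtain t where "fact (m - 1) = fact k * (t::nat)" by blast
  then have "(of_nat (fact (m - 1)) :: 'a) = of_nat (fact k) * of_nat t" by simp
  with h assms(1) show False by simp
qed

lemma coeff_exp_trunc:
  "coeff (exp_trunc m y) n = (if n < m then y ^ n / of_nat (fact n) else 0)"
  unfolding exp_trunc_def by (simp add: coeff_sum coeff_monom)

lemma coeff_exp_mult:
  fixes u w :: "'a::field"
  assumes F: "\<And>k. k < m \<Longrightarrow> (of_nat (fact k) :: 'a) \<noteq> 0" and n: "n < m"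
  shows "coeff (exp_trunc m u * exp_trunc m w) n = (u + w) ^ n / of_nat (fact n)"
proof -
  have "coeff (exp_trunc m u * exp_trunc m w) n =
     (\<Sum>i\<le>n. u ^ i / of_nat (fact i) * (w ^ (n - i) / of_nat (fact (n - i))))"
    using n by (auto simp: coeff_mult coeff_exp_trunc intro!: sum.cong)
  also have "\<dots> = (\<Sum>i\<le>n. of_nat (n choose i) * u ^ i * w ^ (n - i) / of_nat (fact n))"
  proof (rule sum.cong[OF refl])
    fix i assume i: "i \<in> {..n}"
    have eq: "(of_nat (fact i) :: 'a) * of_nat (fact (n - i)) * of_nat (n choose i) = of_nat (fact n)"
      using binomial_fact_lemma[of i n] i by (metis atMost_iff of_nat_mult)
    have a: "(of_nat (fact i) :: 'a) \<noteq> 0" "(of_nat (fact (n - i)) :: 'a) \<noteq> 0" "(of_nat (fact n) :: 'a) \<noteq> 0"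
      using F i n by auto
    show "u ^ i / of_nat (fact i) * (w ^ (n - i) / of_nat (fact (n - i))) =
        of_nat (n choose i) * u ^ i * w ^ (n - i) / of_nat (fact n)"
      using a by (simp add: field_simps eq[symmetric])
  qed
  also have "\<dots> = (u + w) ^ n / of_nat (fact n)"
    by (simp add: binomial_ring sum_divide_distrib)
  finally show ?thesis .
qed

lemma coeff_diff_op:
  fixes A B :: "'a::field poly"
  assumes F: "\<And>k. k < m \<Longrightarrow> (of_nat (fact k) :: 'a) \<noteq> 0" and n: "n < m"
    and B0: "coeff B 0 = 0"
  shows "coeff (diff_op A B (exp_trunc m y)) n = coeff ((A + smult y B) * exp_trunc m y) n"
proof -
  have pd: "coeff (pderiv (exp_trunc m y)) j = coeff (smult y (exp_trunc m y)) j" if j: "j + 1 < m" for j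
  proof -
    have a: "(of_nat (fact (Suc j)) :: 'a) \<noteq> 0" "(of_nat (fact j) :: 'a) \<noteq> 0"
      by (rule F, use j in simp)+
    have fe: "(of_nat (fact (Suc j)) :: 'a) = of_nat (Suc j) * of_nat (fact j)"
      by (metis fact_Suc of_nat_id of_nat_mult)
    from fe a(1) have "(of_nat (Suc j) :: 'a) \<noteq> 0" by (metis mult_zero_left)
    then have "of_nat (Suc j) * (y ^ Suc j / of_nat (fact (Suc j))) = y * (y ^ j / (of_nat (fact j) :: 'a))"
    proof -
      have g: "\<And>S F::'a. S \<noteq> 0 \<Longrightarrow> F \<noteq> 0 \<Longrightarrow> S * (y * y ^ j / (S * F)) = y * (y ^ j / F)"
        by (simp add: field_simps)
      show ?thesis unfolding fe power_Suc by (rule g) fact+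
    qed
    then show ?thesis using j
      by (simp add: coeff_pderiv coeff_exp_trunc del: of_nat_Suc fact_Suc)
  qed
  have "coeff (B * pderiv (exp_trunc m y)) n = coeff (B * smult y (exp_trunc m y)) n"
    unfolding coeff_mult
  proof (rule sum.cong[OF refl])
    fix i assume "i \<in> {..n}"
    then show "coeff B i * coeff (pderiv (exp_trunc m y)) (n - i) =
          coeff B i * coeff (smult y (exp_trunc m y)) (n - i)"
      using B0 n pd[of "n - i"] by (cases "i = 0") auto
  qed
  then show ?thesis by (simp add: diff_op_def algebra_simps)
qed


lemma exp_in_V:
  assumes "y \<in> Y" "finite Y"
  shows "exp_trunc m y \<in> V_space m Y"
proof -
  have "(\<Sum>z\<in>Y. smult (if z = y then 1 else 0) (exp_trunc m z)) = exp_trunc m y"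
  proof -
    have "\<And>z. smult (if z = y then 1 else 0) (exp_trunc m z) = (if z = y then exp_trunc m z else 0)"
      by simp
    then show ?thesis using assms by (simp add: sum.delta)
  qed
  then show ?thesis unfolding V_space_def
    by (intro CollectI exI[of _ "\<lambda>z. if z = y then 1 else 0"]) simp
qed

lemma local_rel:
  fixes A B :: "'a::field poly" and y :: 'a and Y :: "'a set" and m :: nat
  assumes F: "\<And>k. k < m \<Longrightarrow> (of_nat (fact k) :: 'a) \<noteq> 0"
    and y: "y \<in> Y" and fin: "finite Y" and B0: "coeff B 0 = 0"
    and inv: "diff_op A B ` V_space m Y \<subseteq> V_space m Y"
  shows "\<exists>c. \<forall>n<m. of_nat (fact n) * (coeff A n + y * coeff B n) = (\<Sum>z\<in>Y. c z * (z - y) ^ n)"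
proof -
  let ?E = "exp_trunc m"
  have "diff_op A B (?E y) \<in> V_space m Y" using inv exp_in_V[OF y fin] by blast
  then obtain c where c: "monom 1 m dvd (diff_op A B (?E y) - (\<Sum>z\<in>Y. smult (c z) (?E z)))"
    unfolding V_space_def by blast
  let ?P = "A + smult y B"
  have 1: "coeff (?P * ?E y) n = (\<Sum>z\<in>Y. c z * coeff (?E z) n)" if n: "n < m" for n
  proof -
    have "coeff (diff_op A B (?E y)) n = coeff (\<Sum>z\<in>Y. smult (c z) (?E z)) n"
      using c n unfolding monom_1_dvd_iff' by (simp add: coeff_diff)
    then show ?thesis using coeff_diff_op[OF F n B0] by (simp add: coeff_sum)
  qed
  have 2: "coeff (?P * ?E y * ?E (-y)) n = (\<Sum>z\<in>Y. c z * ((z - y) ^ n / of_nat (fact n)))"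
    if n: "n < m" for n
  proof -
    have "coeff (?P * ?E y * ?E (-y)) n = (\<Sum>i\<le>n. coeff (?P * ?E y) i * coeff (?E (-y)) (n - i))"
      by (simp add: coeff_mult)
    also have "\<dots> = (\<Sum>i\<le>n. (\<Sum>z\<in>Y. c z * coeff (?E z) i) * coeff (?E (-y)) (n - i))"
      using n by (intro sum.cong refl) (simp add: 1)
    also have "\<dots> = (\<Sum>z\<in>Y. c z * (\<Sum>i\<le>n. coeff (?E z) i * coeff (?E (-y)) (n - i)))"
      by (simp add: sum_distrib_left sum_distrib_right sum.swap[of _ "{..n}"] mult.assoc)
    also have "\<dots> = (\<Sum>z\<in>Y. c z * coeff (?E z * ?E (-y)) n)"
      by (simp add: coeff_mult)
    also have "\<dots> = (\<Sum>z\<in>Y. c z * ((z - y) ^ n / of_nat (fact n)))"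
      using coeff_exp_mult[OF F n] by simp
    finally show ?thesis .
  qed
  have 3: "coeff (?P * ?E y * ?E (-y)) n = coeff ?P n" if n: "n < m" for n
  proof -
    have e: "coeff (?E y * ?E (-y)) i = (if i = 0 then 1 else 0)" if "i \<le> n" for i
      using coeff_exp_mult[OF F, where n=i and u=y and w="-y"] that n by simp
    have "coeff (?P * ?E y * ?E (-y)) n = (\<Sum>i\<le>n. coeff ?P (n - i) * coeff (?E y * ?E (-y)) i)"
      unfolding mult.assoc coeff_mult
      by (rule sum.reindex_bij_witness[of _ "\<lambda>i. n - i" "\<lambda>i. n - i"]) (auto simp: mult.commute)
    also have "\<dots> = (\<Sum>i\<le>n. (if i = 0 then coeff ?P (n - i) else 0))"
      using e by (intro sum.cong refl) simp
    also have "\<dots> = coeff ?P n" by (subst sum.delta) auto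
    finally show ?thesis .
  qed
  show ?thesis
  proof (intro exI allI impI)
    fix n assume n: "n < m"
    have "coeff ?P n = (\<Sum>z\<in>Y. c z * (z - y) ^ n) / of_nat (fact n)"
      using 2[OF n] 3[OF n] by (simp add: sum_divide_distrib)
    then show "of_nat (fact n) * (coeff A n + y * coeff B n) = (\<Sum>z\<in>Y. c z * (z - y) ^ n)"
      using F[OF n] by (simp add: field_simps)
  qed
qed

lemma two_choose: "2 * (d choose 2) = d * (d - 1)"
proof -
  have "even (d * (d - 1))" by (cases d) auto
  then show ?thesis by (simp add: choose_two)
qed

lemma sidon:
  fixes Y :: "'a::field set"
  assumes fin: "finite Y" and ne: "Y \<noteq> {}" and cd: "card Y = d"
    and cD: "card {y1 - y2 | y1 y2. y1 \<in> Y \<and> y2 \<in> Y} = 1 + 2 * (d choose 2)"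
  shows "\<forall>p q r s. p \<in> Y \<longrightarrow> q \<in> Y \<longrightarrow> r \<in> Y \<longrightarrow> s \<in> Y \<longrightarrow> p \<noteq> q \<longrightarrow> p - q = r - s \<longrightarrow> p = r \<and> q = s"
proof -
  define S where "S = Y \<times> Y - (\<lambda>y. (y, y)) ` Y"
  define f where "f = (\<lambda>(p::'a, q). p - q)"
  have finS: "finite S" using fin unfolding S_def by simp
  have "card ((\<lambda>y. (y, y)) ` Y) = d" using cd by (subst card_image) (auto simp: inj_on_def)
  then have cS: "card S = d * d - d" unfolding S_def using fin cd
    by (subst card_Diff_subset) (auto simp: card_cartesian_product)
  have D: "{y1 - y2 | y1 y2. y1 \<in> Y \<and> y2 \<in> Y} = insert 0 (f ` S)"
    unfolding S_def f_def by (auto simp: image_iff, use ne in blast)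
  have n0: "0 \<notin> f ` S" unfolding S_def f_def by auto
  have "card (insert 0 (f ` S)) = Suc (card (f ` S))"
    using n0 finS by simp
  then have "card (f ` S) = d * (d - 1)" using cD D two_choose[of d] by simp
  also have "d * (d - 1) = d * d - d" by (simp add: diff_mult_distrib2)
  finally have "inj_on f S" using cS finS by (intro eq_card_imp_inj_on) auto
  then show ?thesis unfolding inj_on_def S_def f_def
    by (smt (verit, ccfv_threshold) DiffI Pair_inject SigmaI case_prod_conv diff_self eq_iff_diff_eq_0 imageE)
qed


lemma sum_poly_swap:
  fixes Q :: "'a::field poly"
  shows "(\<Sum>z\<in>Y. h z * poly Q (z - x)) = (\<Sum>n\<le>degree Q. coeff Q n * (\<Sum>z\<in>Y. h z * (z - x) ^ n))"
  unfolding poly_altdef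
  by (simp add: sum_distrib_left sum.swap[of _ Y] mult_ac)

lemma key:
  fixes Y :: "'a::field set" and a b c :: 'a
  assumes fin: "finite Y" and abc: "a \<in> Y" "b \<in> Y" "c \<in> Y" and dist: "a \<noteq> b" "b \<noteq> c" "a \<noteq> c"
    and sid: "\<forall>p q r s. p \<in> Y \<longrightarrow> q \<in> Y \<longrightarrow> r \<in> Y \<longrightarrow> s \<in> Y \<longrightarrow> p \<noteq> q \<longrightarrow> p - q = r - s \<longrightarrow> p = r \<and> q = s"
    and cm: "3 * card Y \<le> m + 2"
    and rel: "\<forall>n<m. (b - c) * (\<Sum>z\<in>Y. ca z * (z - a) ^ n) + (c - a) * (\<Sum>z\<in>Y. cb z * (z - b) ^ n)
                  + (a - b) * (\<Sum>z\<in>Y. cc z * (z - c) ^ n) = 0"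
  shows "\<forall>z0\<in>Y. z0 \<noteq> a \<longrightarrow> ca z0 = 0"
proof (intro ballI impI)
  fix z0 assume z0: "z0 \<in> Y" "z0 \<noteq> a"
  define w0 where "w0 = z0 - a"
  define W where "W = insert 0 ((\<lambda>z. z - a) ` (Y - {a}) \<union> (\<lambda>z. z - b) ` (Y - {b}) \<union> (\<lambda>z. z - c) ` (Y - {c}))"
  have finW: "finite W" unfolding W_def using fin by simp
  have inW: "z - a \<in> W" "z - b \<in> W" "z - c \<in> W" if "z \<in> Y" for z
    unfolding W_def using that by auto
  have "card W \<le> Suc (card ((\<lambda>z. z - a) ` (Y - {a}) \<union> (\<lambda>z. z - b) ` (Y - {b}) \<union> (\<lambda>z. z - c) ` (Y - {c})))"
    unfolding W_def using fin by (simp add: card_insert_if)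
  also have "\<dots> \<le> Suc (card ((\<lambda>z. z - a) ` (Y - {a})) + card ((\<lambda>z. z - b) ` (Y - {b})) + card ((\<lambda>z. z - c) ` (Y - {c})))"
    by (meson Suc_le_mono card_Un_le le_trans add_le_mono order_refl)
  also have "\<dots> \<le> Suc (card (Y - {a}) + card (Y - {b}) + card (Y - {c}))"
    using fin by (simp only: Suc_le_mono) (intro add_le_mono card_image_le; simp)
  also have "\<dots> = Suc (3 * (card Y - 1))" using fin abc by simp
  finally have cW0: "card W \<le> Suc (3 * (card Y - 1))" .
  have "card Y \<ge> 1" using fin abc by (metis One_nat_def Suc_leI card_gt_0_iff empty_iff)
  then have cW: "card W < Suc m" using cW0 cm by linarith
  define Q where "Q = (\<Prod>w\<in>W - {w0}. [:- w, 1:])"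
  have w0W: "w0 \<in> W" unfolding w0_def using inW z0 by auto
  have "degree Q = card (W - {w0})" unfolding Q_def
    by (subst degree_prod_eq_sum_degree) auto
  also have "\<dots> < m"
  proof -
    have "card W > 0" using w0W finW card_gt_0_iff by blast
    then show ?thesis using cW w0W finW by simp
  qed
  finally have degQ: "degree Q < m" .
  have pQ: "poly Q w = 0" if "w \<in> W" "w \<noteq> w0" for w
    unfolding Q_def poly_prod using that finW by (simp add: prod_zero_iff)
  have pQ0: "poly Q w0 \<noteq> 0"
    unfolding Q_def poly_prod using finW by (simp add: prod_zero_iff)
  have "(b - c) * (\<Sum>z\<in>Y. ca z * poly Q (z - a)) + (c - a) * (\<Sum>z\<in>Y. cb z * poly Q (z - b))
                  + (a - b) * (\<Sum>z\<in>Y. cc z * poly Q (z - c)) =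
      (\<Sum>n\<le>degree Q. coeff Q n * ((b - c) * (\<Sum>z\<in>Y. ca z * (z - a) ^ n) + (c - a) * (\<Sum>z\<in>Y. cb z * (z - b) ^ n)
                  + (a - b) * (\<Sum>z\<in>Y. cc z * (z - c) ^ n)))"
    unfolding sum_poly_swap by (simp add: sum_distrib_left sum.distrib algebra_simps)
  also have "\<dots> = 0" using rel degQ by (intro sum.neutral) auto
  finally have E: "(b - c) * (\<Sum>z\<in>Y. ca z * poly Q (z - a)) + (c - a) * (\<Sum>z\<in>Y. cb z * poly Q (z - b))
                  + (a - b) * (\<Sum>z\<in>Y. cc z * poly Q (z - c)) = 0" .
  have s1: "(\<Sum>z\<in>Y. ca z * poly Q (z - a)) = ca z0 * poly Q w0"
  proof -
    have "(\<Sum>z\<in>Y. ca z * poly Q (z - a)) = ca z0 * poly Q (z0 - a) + (\<Sum>z\<in>Y - {z0}. ca z * poly Q (z - a))"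
      using fin z0 by (simp add: sum.remove)
    also have "(\<Sum>z\<in>Y - {z0}. ca z * poly Q (z - a)) = 0"
      by (intro sum.neutral ballI) (simp add: pQ inW w0_def)
    finally show ?thesis by (simp add: w0_def)
  qed
  have s2: "(\<Sum>z\<in>Y. cb z * poly Q (z - b)) = 0"
  proof (intro sum.neutral ballI)
    fix z assume z: "z \<in> Y"
    have "z - b \<noteq> w0" using sid z z0 abc dist unfolding w0_def by metis
    then show "cb z * poly Q (z - b) = 0" using pQ inW z by simp
  qed
  have s3: "(\<Sum>z\<in>Y. cc z * poly Q (z - c)) = 0"
  proof (intro sum.neutral ballI)
    fix z assume z: "z \<in> Y"
    have "z - c \<noteq> w0" using sid z z0 abc dist unfolding w0_def by metis
    then show "cc z * poly Q (z - c) = 0" using pQ inW z by simp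
  qed
  from E s1 s2 s3 have "(b - c) * (ca z0 * poly Q w0) = 0" by simp
  then show "ca z0 = 0" using pQ0 dist by simp
qed


lemma P_zero:
  fixes A B :: "'a::field poly"
  assumes fin: "finite Y" and a: "a \<in> Y" and m: "0 < m"
    and F: "\<And>k. k < m \<Longrightarrow> (of_nat (fact k) :: 'a) \<noteq> 0"
    and cz: "\<forall>z\<in>Y. z \<noteq> a \<longrightarrow> ca z = 0"
    and eq: "\<forall>n<m. of_nat (fact n) * (coeff A n + a * coeff B n) = (\<Sum>z\<in>Y. ca z * (z - a) ^ n)"
    and A0: "coeff A 0 = 0" and B0: "coeff B 0 = 0"
  shows "\<forall>n<m. coeff A n + a * coeff B n = 0"
proof -
  have s: "(\<Sum>z\<in>Y. ca z * (z - a) ^ n) = ca a * 0 ^ n" for n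
  proof -
    have "(\<Sum>z\<in>Y. ca z * (z - a) ^ n) = ca a * (a - a) ^ n + (\<Sum>z\<in>Y - {a}. ca z * (z - a) ^ n)"
      using fin a by (simp add: sum.remove)
    also have "(\<Sum>z\<in>Y - {a}. ca z * (z - a) ^ n) = 0" using cz by (intro sum.neutral) auto
    finally show ?thesis by simp
  qed
  have "ca a = 0" using eq[rule_format, OF m] s[of 0] A0 B0 by simp
  then show ?thesis using eq s F by simp
qed

theorem mainTheorem13:
  fixes Y :: "'a::field set" and d m :: nat
  assumes "d \<ge> 3" and "m \<ge> 3 * d - 2"
    and "(of_nat (fact (m - 1)) :: 'a) \<noteq> 0"
    and "finite Y" and "card Y = d"
    and "card {y1 - y2 | y1 y2. y1 \<in> Y \<and> y2 \<in> Y} = 1 + 2 * (d choose 2)"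
  shows "\<not> (\<exists>A B :: 'a poly.
             (A \<noteq> 0 \<or> B \<noteq> 0) \<and>
             poly A 0 = 0 \<and> poly B 0 = 0 \<and>
             degree A < m \<and> degree B < m \<and>
             diff_op A B ` V_space m Y \<subseteq> V_space m Y)"
proof
  assume "\<exists>A B :: 'a poly.
             (A \<noteq> 0 \<or> B \<noteq> 0) \<and>
             poly A 0 = 0 \<and> poly B 0 = 0 \<and>
             degree A < m \<and> degree B < m \<and>
             diff_op A B ` V_space m Y \<subseteq> V_space m Y"
  then obtain A B :: "'a poly" where nz: "A \<noteq> 0 \<or> B \<noteq> 0" and A0: "coeff A 0 = 0" and B0: "coeff B 0 = 0"
    and dA: "degree A < m" and dB: "degree B < m" and inv: "diff_op A B ` V_space m Y \<subseteq> V_space m Y"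
    by (auto simp: poly_0_coeff_0)
  have fin: "finite Y" and cY: "card Y = d" using assms by auto
  have F: "\<And>k. k < m \<Longrightarrow> (of_nat (fact k) :: 'a) \<noteq> 0" using fact_nz assms(3) by blast
  have m: "0 < m" using assms(1,2) by linarith
  have cm: "3 * card Y \<le> m + 2" using assms(1,2) cY by linarith
  have "Y \<noteq> {}" using cY assms(1) by auto
  then obtain a where a: "a \<in> Y" by blast
  have "card (Y - {a}) \<ge> 2" using a fin cY assms(1) by simp
  then have "Y - {a} \<noteq> {}" by (cases "Y - {a} = {}") auto
  then obtain b where b: "b \<in> Y" "b \<noteq> a" by blast
  have "card (Y - {a} - {b}) \<ge> 1" using a b fin cY assms(1) by simp
  then have "Y - {a} - {b} \<noteq> {}" by (cases "Y - {a} - {b} = {}") auto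
  then obtain c where c: "c \<in> Y" "c \<noteq> a" "c \<noteq> b" by blast
  have sid: "\<forall>p q r s. p \<in> Y \<longrightarrow> q \<in> Y \<longrightarrow> r \<in> Y \<longrightarrow> s \<in> Y \<longrightarrow> p \<noteq> q \<longrightarrow> p - q = r - s \<longrightarrow> p = r \<and> q = s"
    using sidon[OF fin \<open>Y \<noteq> {}\<close> cY assms(6)] .
  obtain ca where ca: "\<forall>n<m. of_nat (fact n) * (coeff A n + a * coeff B n) = (\<Sum>z\<in>Y. ca z * (z - a) ^ n)"
    using local_rel[OF F a fin B0 inv] by blast
  obtain cb where cb: "\<forall>n<m. of_nat (fact n) * (coeff A n + b * coeff B n) = (\<Sum>z\<in>Y. cb z * (z - b) ^ n)"
    using local_rel[OF F b(1) fin B0 inv] by blast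
  obtain cc where cc: "\<forall>n<m. of_nat (fact n) * (coeff A n + c * coeff B n) = (\<Sum>z\<in>Y. cc z * (z - c) ^ n)"
    using local_rel[OF F c(1) fin B0 inv] by blast
  have rel: "\<forall>n<m. (b - c) * (\<Sum>z\<in>Y. ca z * (z - a) ^ n) + (c - a) * (\<Sum>z\<in>Y. cb z * (z - b) ^ n)
                  + (a - b) * (\<Sum>z\<in>Y. cc z * (z - c) ^ n) = 0"
  proof (intro allI impI)
    fix n assume n: "n < m"
    have "(b - c) * (of_nat (fact n) * (coeff A n + a * coeff B n))
        + (c - a) * (of_nat (fact n) * (coeff A n + b * coeff B n))
        + (a - b) * (of_nat (fact n) * (coeff A n + c * coeff B n)) = 0"
      by (simp add: algebra_simps)
    then show "(b - c) * (\<Sum>z\<in>Y. ca z * (z - a) ^ n) + (c - a) * (\<Sum>z\<in>Y. cb z * (z - b) ^ n)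
                  + (a - b) * (\<Sum>z\<in>Y. cc z * (z - c) ^ n) = 0"
      using ca cb cc n by simp
  qed
  have rel2: "\<forall>n<m. (c - a) * (\<Sum>z\<in>Y. cb z * (z - b) ^ n) + (a - b) * (\<Sum>z\<in>Y. cc z * (z - c) ^ n)
                  + (b - c) * (\<Sum>z\<in>Y. ca z * (z - a) ^ n) = 0"
    using rel by (simp add: add_ac)
  have za: "\<forall>z0\<in>Y. z0 \<noteq> a \<longrightarrow> ca z0 = 0"
    using key[OF fin a b(1) c(1) _ _ _ sid cm rel] b c by auto
  have zb: "\<forall>z0\<in>Y. z0 \<noteq> b \<longrightarrow> cb z0 = 0"
    using key[OF fin b(1) c(1) a _ _ _ sid cm rel2] b c by auto
  have Pa: "\<forall>n<m. coeff A n + a * coeff B n = 0" by (rule P_zero[OF fin a m F za ca A0 B0])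
  have Pb: "\<forall>n<m. coeff A n + b * coeff B n = 0" by (rule P_zero[OF fin b(1) m F zb cb A0 B0])
  have Bz: "coeff B n = 0" for n
  proof (cases "n < m")
    case True
    have "(a - b) * coeff B n = (coeff A n + a * coeff B n) - (coeff A n + b * coeff B n)"
      by (simp add: algebra_simps)
    then have "(a - b) * coeff B n = 0" using Pa Pb True by simp
    then show ?thesis using b by simp
  next
    case False then show ?thesis using dB by (simp add: coeff_eq_0)
  qed
  have Az: "coeff A n = 0" for n
  proof (cases "n < m")
    case True then show ?thesis using Pa Bz by simp
  next
    case False then show ?thesis using dA by (simp add: coeff_eq_0)
  qed
  have "A = 0" "B = 0" using Az Bz by (auto intro: poly_eqI)
  with nz show False by simp
qed

end
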